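(* Let $X=X_1\times\cdots\times X_n$ be finite, $S=\{1,\ldots,n\}$, and let $\varrho(\mathcal{C})\ge 0$ be given for every partition $\mathcal{C}$ of $S$. Then the recombination equation \[ \dot\omega_t=\sum_{\mathcal{A}\in\boldsymbol{P}(S)}\varrho(\mathcal{A})\big(\mathcal{R}_{\mathcal{A}}(\omega_t)-\omega_t\big) \] for a differentiable curve $(\omega_t)_{t\ge0}$ of probability measures on $X$ is the law of mass action of the chemical reaction network consisting of the reactions \[ \sum_{j=1}^{|\mathcal{C}|} x^{(j)} \xrightarrow{\ \varrho(\mathcal{C})/|\mathcal{C}|\ } \sum_{j=1}^{|\mathcal{C}|}\ \bigsqcup_{i=1}^{|\mathcal{C}|}\pi_{C_i}\big(x^{(i+j-1)}\big), \] one for every $\mathcal{C}=\{C_1,\ldots,C_{|\mathcal{C}|}\}\in\boldsymbol{P}(S)$ and every ordered tuple $(x^{(1)},\ldots,x^{(|\mathcal{C}|)})\in X^{|\mathcal{C}|}$ (indices read modulo $|\mathcal{C}|$). That is, the recombination equation is equivalent to \[ \dot{\omega}_t = \sum_{\mathcal{C} \in \boldsymbol{P}(S)} \sum_{x^{(1)},\ldots,x^{(|\mathcal{C}|)} \in X} \frac{\varrho(\mathcal{C})}{|\mathcal{C}|} \, \omega_t \big (x^{(1)} \big) \cdots \omega_t \big (x^{(|\mathcal{C}|)} \big) \sum_{j = 1}^{|\mathcal{C}|} \Big ( \bigsqcup_{i = 1}^{|\mathcal{C}|} \pi_{C_i} \big (x^{(i + j -1)} \big) - x^{(j)} \Big ).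 \]
   Context: $\boldsymbol{P}(S)$ is the set of partitions of $S$; blocks of a partition $\mathcal{C}$ are enumerated so that $C_1$ contains $1$ and, for $k\ge 2$, $C_k$ contains the smallest element not in $C_1\cup\cdots\cup C_{k-1}$. For $A\subseteq S$, $\pi_A:X\to\prod_{i\in A}X_i$ is the coordinate projection; for pairwise disjoint $U_1,\ldots,U_k$ and sequences $y^{(\ell)}$ indexed by $U_\ell$, $y^{(1)}\sqcup\cdots\sqcup y^{(k)}$ is the sequence indexed by $\bigcup U_\ell$ with entry $y^{(j)}_i$ at site $i\in U_j$. The recombinator is $\mathcal{R}_{\mathcal{A}}(\nu)=\bigotimes_{i=1}^{|\mathcal{A}|}\pi_{A_i}.\nu$ (product of push-forward marginals). Measures on the finite set $X$ are identified with vectors in $\mathbb{R}^X$, and each $x\in X$ with the point mass $\delta_x$ (basis vector); so sums of elements of $X$ are sums of vectors. A chemical reaction network on a finite species set $\mathcal{S}$ is a finite collection of reactions $r_1+\cdots+r_m\xrightarrow{\kappa}s_1+\cdots+s_m$ with $r_i,s_i\in\mathcal{S}$ and $\kappa\ge0$; its law of mass action is the ODE $\dot c_t=\sum \kappa\, c_t(r_1)\cdots c_t(r_m)\,(s_1+\cdots+s_m-r_1-\cdots-r_m)$, summed over all reactions, for the concentration vector $c_t\in\mathbb{R}^{\mathcal{S}}$. *)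

theory Defs
  imports "HOL-Analysis.Analysis" "HOL-Library.Disjoint_Sets" "HOL-Library.FuncSet"
begin

definition partitions :: "'s set \<Rightarrow> 's set set set" where
  "partitions S = {C. partition_on S C}"

(* Enumeration of the blocks of a partition C of S (0-indexed): the first block
   contains Min S, block k contains the smallest element of S not in the
   previous blocks. blocks_upto S C k lists the first k blocks. *)
fun blocks_upto :: "nat set \<Rightarrow> nat set set \<Rightarrow> nat \<Rightarrow> nat set list" where
  "blocks_upto S C 0 = []"
| "blocks_upto S C (Suc k) =
     (let prev = blocks_upto S C k;
          m = Min (S - \<Union>(set prev))
      in prev @ [THE B. B \<in> C \<and> m \<in> B])"

(* block S C k = C_{k+1} in the paper's (1-indexed) numbering *)
definition block :: "nat set \<Rightarrow> nat set set \<Rightarrow> nat \<Rightarrow> nat set" where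
  "block S C k = blocks_upto S C (Suc k) ! k"

definition block_idx :: "nat set \<Rightarrow> nat set set \<Rightarrow> nat \<Rightarrow> nat" where
  "block_idx S C s = (THE i. i < card C \<and> s \<in> block S C i)"

definition delta :: "'x \<Rightarrow> 'x \<Rightarrow> real" where
  "delta x = (\<lambda>y. if y = x then 1 else 0)"

definition pushfwd :: "'x set \<Rightarrow> ('x \<Rightarrow> 'y) \<Rightarrow> ('x \<Rightarrow> real) \<Rightarrow> 'y \<Rightarrow> real" where
  "pushfwd X f \<nu> y = (\<Sum>z\<in>{z\<in>X. f z = y}. \<nu> z)"

definition recomb :: "(nat \<Rightarrow> 'a) set \<Rightarrow> nat set \<Rightarrow> nat set set
                      \<Rightarrow> ((nat \<Rightarrow> 'a) \<Rightarrow> real) \<Rightarrow> (nat \<Rightarrow> 'a) \<Rightarrow> real" where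
  "recomb X S A \<nu> = (\<lambda>x. \<Prod>i<card A.
       pushfwd X (\<lambda>z. restrict z (block S A i)) \<nu> (restrict x (block S A i)))"

definition recomb_rhs :: "(nat \<Rightarrow> 'a) set \<Rightarrow> nat set \<Rightarrow> (nat set set \<Rightarrow> real)
                      \<Rightarrow> ((nat \<Rightarrow> 'a) \<Rightarrow> real) \<Rightarrow> (nat \<Rightarrow> 'a) \<Rightarrow> real" where
  "recomb_rhs X S \<rho> \<omega> = (\<lambda>x. \<Sum>A\<in>partitions S. \<rho> A * (recomb X S A \<omega> x - \<omega> x))"

(* law of mass action of a chemical reaction network whose reactions are indexed
   by the finite set I: reaction i is  r_1+...+r_m --kappa i--> s_1+...+s_m
   with reactants R i = [r_1,...,r_m] and products P i = [s_1,...,s_m]. *)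
definition mass_action :: "'i set \<Rightarrow> ('i \<Rightarrow> real) \<Rightarrow> ('i \<Rightarrow> 's list) \<Rightarrow> ('i \<Rightarrow> 's list)
                           \<Rightarrow> ('s \<Rightarrow> real) \<Rightarrow> 's \<Rightarrow> real" where
  "mass_action I \<kappa> R P c = (\<lambda>y. \<Sum>i\<in>I. \<kappa> i * prod_list (map c (R i)) *
       ((\<Sum>s\<leftarrow>P i. delta s y) - (\<Sum>r\<leftarrow>R i. delta r y)))"

(* gluing: (glue S C xs j) = \<Squnion>_{i} pi_{C_i}(x^{(i+j)}) (0-based, indices mod |C|),
   i.e. at site s in block C_i it takes the entry of xs ! ((i+j) mod |C|). *)
definition glue :: "nat set \<Rightarrow> nat set set \<Rightarrow> (nat \<Rightarrow> 'a) list \<Rightarrow> nat \<Rightarrow> nat \<Rightarrow> 'a" where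
  "glue S C xs j = (\<lambda>s. if s \<in> S then (xs ! ((block_idx S C s + j) mod card C)) s else undefined)"

definition rec_reactions :: "(nat \<Rightarrow> 'a) set \<Rightarrow> nat set \<Rightarrow> (nat set set \<times> (nat \<Rightarrow> 'a) list) set" where
  "rec_reactions X S = {(C, xs). C \<in> partitions S \<and> length xs = card C \<and> set xs \<subseteq> X}"

definition rec_rate :: "(nat set set \<Rightarrow> real) \<Rightarrow> nat set set \<times> (nat \<Rightarrow> 'a) list \<Rightarrow> real" where
  "rec_rate \<rho> r = \<rho> (fst r) / real (card (fst r))"

definition rec_reactants :: "nat set set \<times> (nat \<Rightarrow> 'a) list \<Rightarrow> (nat \<Rightarrow> 'a) list" where
  "rec_reactants r = snd r"

definition rec_products :: "nat set \<Rightarrow> nat set set \<times> (nat \<Rightarrow> 'a) list \<Rightarrow> (nat \<Rightarrow> 'a) list" where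
  "rec_products S r = map (glue S (fst r) (snd r)) [0..<card (fst r)]"

end

theory Submission
  imports Defs
begin

lemma prod_list_nth: "prod_list (map f xs) = (\<Prod>i<length xs. (f (xs!i)::real))"
  by (induct xs) (simp_all add: prod.lessThan_Suc_shift del: prod.lessThan_Suc)

lemma sum_list_nth: "sum_list (map f xs) = (\<Sum>i<length xs. (f (xs!i)::real))"
  by (induct xs) (simp_all add: sum.lessThan_Suc_shift del: sum.lessThan_Suc)

lemma lists_prod_sum:
  fixes F :: "nat \<Rightarrow> 'b \<Rightarrow> real"
  assumes "finite X"
  shows "(\<Sum>xs\<in>{xs. length xs = k \<and> set xs \<subseteq> X}. \<Prod>m<k. F m (xs!m)) = (\<Prod>m<k. \<Sum>z\<in>X. F m z)"
proof (induct k arbitrary: F)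
  case 0
  have "{xs. length xs = 0 \<and> set xs \<subseteq> X} = {[]}" by auto
  then show ?case by simp
next
  case (Suc k)
  let ?L = "{xs. length xs = k \<and> set xs \<subseteq> X}"
  have eq: "{xs. length xs = Suc k \<and> set xs \<subseteq> X} = (\<lambda>(x,xs). x#xs) ` (X \<times> ?L)"
  proof (rule set_eqI, rule iffI)
    fix xs assume "xs \<in> {xs. length xs = Suc k \<and> set xs \<subseteq> X}"
    then show "xs \<in> (\<lambda>(x,xs). x#xs) ` (X \<times> ?L)"
      by (cases xs) (auto intro!: image_eqI[where x="(hd xs, tl xs)"])
  qed auto
  have inj: "inj_on (\<lambda>(x,xs). x#xs) (X \<times> ?L)" by (auto simp: inj_on_def)
  have fin: "finite ?L" using finite_lists_length_eq[OF assms, of k]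
    by (simp add: conj_commute)
  have "(\<Sum>xs\<in>{xs. length xs = Suc k \<and> set xs \<subseteq> X}. \<Prod>m<Suc k. F m (xs!m))
     = (\<Sum>p\<in>X \<times> ?L. F 0 (fst p) * (\<Prod>m<k. F (Suc m) (snd p ! m)))"
    unfolding eq by (subst sum.reindex[OF inj]) (auto simp: prod.lessThan_Suc_shift simp del: prod.lessThan_Suc intro!: sum.cong)
  also have "\<dots> = (\<Sum>x\<in>X. \<Sum>xs\<in>?L. F 0 x * (\<Prod>m<k. F (Suc m) (xs ! m)))"
    by (subst sum.cartesian_product) (simp add: case_prod_beta)
  also have "\<dots> = (\<Sum>x\<in>X. F 0 x) * (\<Sum>xs\<in>?L. \<Prod>m<k. F (Suc m) (xs ! m))"
    by (simp add: sum_product)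
  also have "\<dots> = (\<Sum>x\<in>X. F 0 x) * (\<Prod>m<k. \<Sum>z\<in>X. F (Suc m) z)"
    using Suc[of "\<lambda>m. F (Suc m)"] by simp
  also have "\<dots> = (\<Prod>m<Suc k. \<Sum>z\<in>X. F m z)" by (simp add: prod.lessThan_Suc_shift del: prod.lessThan_Suc)
  finally show ?case .
qed

lemma ind_all: "finite A \<Longrightarrow> (if \<forall>m\<in>A. P m then 1 else 0) = (\<Prod>m\<in>A. if P m then 1 else (0::real))"
  by (induct A rule: finite_induct) auto

lemma core_glue:
  fixes \<nu> :: "(nat \<Rightarrow> 'a) \<Rightarrow> real" and B :: "nat \<Rightarrow> nat set"
  assumes k: "0 < k" and finX: "finite X" and X: "X = PiE S Xs"
    and Bsub: "\<And>i. i < k \<Longrightarrow> B i \<subseteq> S"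
    and disj: "\<And>i i'. i < k \<Longrightarrow> i' < k \<Longrightarrow> i \<noteq> i' \<Longrightarrow> B i \<inter> B i' = {}"
    and cover: "\<And>s. s \<in> S \<Longrightarrow> idx s < k \<and> s \<in> B (idx s)"
    and y: "y \<in> X" and j: "j < k"
  shows "(\<Sum>xs\<in>{xs. length xs = k \<and> set xs \<subseteq> X}. (\<Prod>m<k. \<nu> (xs!m)) *
            (if y = (\<lambda>s. if s\<in>S then (xs ! ((idx s + j) mod k)) s else undefined) then 1 else 0))
       = (\<Prod>i<k. pushfwd X (\<lambda>z. restrict z (B i)) \<nu> (restrict y (B i)))"
proof -
  define \<sigma> where "\<sigma> m = (m + (k - j)) mod k" for m
  have s1: "(\<sigma> m + j) mod k = m" if "m < k" for m
  proof -
    have "(\<sigma> m + j) mod k = (m + (k - j) + j) mod k" unfolding \<sigma>_def by (simp add: mod_add_left_eq)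
    also have "\<dots> = (m + k) mod k" using j by simp
    finally show ?thesis using that by simp
  qed
  have s2: "\<sigma> ((i + j) mod k) = i" if "i < k" for i
  proof -
    have "\<sigma> ((i + j) mod k) = ((i + j) + (k - j)) mod k" unfolding \<sigma>_def by (simp add: mod_add_left_eq)
    also have "\<dots> = (i + k) mod k" using j by simp
    finally show ?thesis using that by simp
  qed
  have slt: "\<sigma> m < k" for m unfolding \<sigma>_def using k by simp
  have bij: "bij_betw \<sigma> {..<k} {..<k}"
    by (rule bij_betw_byWitness[where f'="\<lambda>i. (i + j) mod k"]) (use s1 s2 slt k in auto)
  define P where "P m z = (restrict z (B (\<sigma> m)) = restrict y (B (\<sigma> m)))" for m z
  have yS: "y s = undefined" if "s \<notin> S" for s using y that X by auto
  have glue_iff: "(y = (\<lambda>s. if s\<in>S then (xs ! ((idx s + j) mod k)) s else undefined))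
       = (\<forall>m\<in>{..<k}. P m (xs!m))" for xs :: "(nat \<Rightarrow> 'a) list"
  proof
    assume H: "y = (\<lambda>s. if s\<in>S then (xs ! ((idx s + j) mod k)) s else undefined)"
    show "\<forall>m\<in>{..<k}. P m (xs!m)"
    proof
      fix m assume m: "m \<in> {..<k}"
      show "P m (xs!m)" unfolding P_def
      proof (rule ext)
        fix s
        show "restrict (xs ! m) (B (\<sigma> m)) s = restrict y (B (\<sigma> m)) s"
        proof (cases "s \<in> B (\<sigma> m)")
          case True
          then have sS: "s \<in> S" using Bsub slt by blast
          have "idx s = \<sigma> m" using cover[OF sS] disj[of "idx s" "\<sigma> m"] True slt by blast
          then show ?thesis using H True sS s1 m by simp
        qed simp
      qed
    qed
  next
    assume H: "\<forall>m\<in>{..<k}. P m (xs!m)"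
    show "y = (\<lambda>s. if s\<in>S then (xs ! ((idx s + j) mod k)) s else undefined)"
    proof (rule ext)
      fix s show "y s = (if s\<in>S then (xs ! ((idx s + j) mod k)) s else undefined)"
      proof (cases "s \<in> S")
        case True
        define m where "m = (idx s + j) mod k"
        have m: "m < k" unfolding m_def using k by simp
        have "\<sigma> m = idx s" unfolding m_def using s2 cover[OF True] by simp
        have "restrict (xs ! m) (B (\<sigma> m)) = restrict y (B (\<sigma> m))"
          using H m unfolding P_def by auto
        then have "restrict (xs ! m) (B (\<sigma> m)) s = restrict y (B (\<sigma> m)) s" by simp
        then have "restrict (xs ! m) (B (idx s)) s = restrict y (B (idx s)) s"
          using \<open>\<sigma> m = idx s\<close> by simp
        then show ?thesis using cover[OF True] m_def True by simp
      qed (simp add: yS)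
    qed
  qed
  have "(\<Sum>xs\<in>{xs. length xs = k \<and> set xs \<subseteq> X}. (\<Prod>m<k. \<nu> (xs!m)) *
            (if y = (\<lambda>s. if s\<in>S then (xs ! ((idx s + j) mod k)) s else undefined) then 1 else 0))
     = (\<Sum>xs\<in>{xs. length xs = k \<and> set xs \<subseteq> X}. \<Prod>m<k. \<nu> (xs!m) * (if P m (xs!m) then 1 else 0))"
    by (intro sum.cong refl) (simp only: glue_iff ind_all[OF finite_lessThan] prod.distrib)
  also have "\<dots> = (\<Prod>m<k. \<Sum>z\<in>X. \<nu> z * (if P m z then 1 else 0))"
    by (rule lists_prod_sum[OF finX])
  also have "\<dots> = (\<Prod>m<k. pushfwd X (\<lambda>z. restrict z (B (\<sigma> m))) \<nu> (restrict y (B (\<sigma> m))))"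
    unfolding pushfwd_def P_def
    by (intro prod.cong refl) (simp add: sum.inter_filter[OF finX, symmetric] if_distrib cong: if_cong)
  also have "\<dots> = (\<Prod>i<k. pushfwd X (\<lambda>z. restrict z (B i)) \<nu> (restrict y (B i)))"
    using prod.reindex_bij_betw[OF bij, of "\<lambda>i. pushfwd X (\<lambda>z. restrict z (B i)) \<nu> (restrict y (B i))"] .
  finally show ?thesis .
qed


lemma core_diag:
  fixes \<nu> :: "'b \<Rightarrow> real"
  assumes finX: "finite X" and y: "y \<in> X" and j: "j < k" and one: "sum \<nu> X = 1"
  shows "(\<Sum>xs\<in>{xs. length xs = k \<and> set xs \<subseteq> X}. (\<Prod>m<k. \<nu> (xs!m)) * (if y = xs!j then 1 else 0)) = \<nu> y"
proof -
  define g where "g m z = (if m = j then (if y = z then 1 else 0) else (1::real))" for m z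
  have "(\<Sum>xs\<in>{xs. length xs = k \<and> set xs \<subseteq> X}. (\<Prod>m<k. \<nu> (xs!m)) * (if y = xs!j then 1 else 0))
      = (\<Sum>xs\<in>{xs. length xs = k \<and> set xs \<subseteq> X}. \<Prod>m<k. \<nu> (xs!m) * g m (xs!m))"
  proof (intro sum.cong refl)
    fix xs :: "'b list"
    have "(\<Prod>m<k. g m (xs!m)) = (if y = xs!j then 1 else 0)"
      unfolding g_def using prod.delta[of "{..<k}" j "\<lambda>m. if y = xs!m then 1 else (0::real)"] j
      by simp
    then show "(\<Prod>m<k. \<nu> (xs!m)) * (if y = xs!j then 1 else 0) = (\<Prod>m<k. \<nu> (xs!m) * g m (xs!m))"
      by (simp add: prod.distrib)
  qed
  also have "\<dots> = (\<Prod>m<k. \<Sum>z\<in>X. \<nu> z * g m z)" by (rule lists_prod_sum[OF finX])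
  also have "\<dots> = (\<Prod>m<k. if m = j then \<nu> y else 1)"
  proof (intro prod.cong refl)
    fix m
    show "(\<Sum>z\<in>X. \<nu> z * g m z) = (if m = j then \<nu> y else 1)"
    proof (cases "m = j")
      case True
      have "(\<Sum>z\<in>X. \<nu> z * g m z) = (\<Sum>z\<in>X. if y = z then \<nu> z else 0)"
        by (intro sum.cong refl) (simp add: g_def True)
      also have "\<dots> = \<nu> y" using sum.delta'[OF finX, of y \<nu>] y by simp
      finally show ?thesis using True by simp
    next
      case False
      then show ?thesis using one by (simp add: g_def)
    qed
  qed
  also have "\<dots> = \<nu> y" using prod.delta[of "{..<k}" j "\<lambda>_. \<nu> y"] j by simp
  finally show ?thesis .
qed

lemma bu_len: "length (blocks_upto S C k) = k"
  by (induct k) (simp_all add: Let_def)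

lemma bu_prefix: "i < k \<Longrightarrow> blocks_upto S C k ! i = blocks_upto S C (Suc i) ! i"
proof (induct k)
  case (Suc k)
  show ?case
  proof (cases "i < k")
    case True
    then show ?thesis using Suc by (simp add: Let_def nth_append bu_len)
  next
    case False
    then have "i = k" using Suc by simp
    then show ?thesis by simp
  qed
qed simp

lemma part_fin: "partition_on S C \<Longrightarrow> finite S \<Longrightarrow> finite C"
  using partition_onD1[of S C] by (metis Sup_le_iff finite_Pow_iff finite_subset subset_Pow_Union)

lemma bu_main:
  assumes P: "partition_on S C" and fS: "finite S"
  shows "k \<le> card C \<Longrightarrow> distinct (blocks_upto S C k) \<and> set (blocks_upto S C k) \<subseteq> C"
proof (induct k)
  case (Suc k)
  let ?p = "blocks_upto S C k"
  have IH: "distinct ?p" "set ?p \<subseteq> C" using Suc by auto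
  have fC: "finite C" using part_fin[OF P fS] .
  have "card (set ?p) = k" using IH distinct_card bu_len by metis
  then have "set ?p \<noteq> C" using Suc by auto
  then obtain B where B: "B \<in> C" "B \<notin> set ?p" using IH by blast
  then obtain s where s: "s \<in> B" using partition_onD3[OF P] by (metis ex_in_conv)
  have sS: "s \<in> S" using partition_onD1[OF P] B s by blast
  have "s \<notin> \<Union>(set ?p)"
  proof
    assume "s \<in> \<Union>(set ?p)"
    then obtain B' where "B' \<in> set ?p" "s \<in> B'" by blast
    then have "B' = B" using partition_onD2[OF P] B IH s by (meson disjointD disjoint_iff subsetD)
    then show False using B \<open>B' \<in> set ?p\<close> by simp
  qed
  then have ne: "S - \<Union>(set ?p) \<noteq> {}" using sS by blast
  define m where "m = Min (S - \<Union>(set ?p))"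
  have m: "m \<in> S" "m \<notin> \<Union>(set ?p)" using Min_in[OF _ ne] fS unfolding m_def by auto
  have ex1: "\<exists>!B. B \<in> C \<and> m \<in> B"
  proof -
    obtain B where "B \<in> C" "m \<in> B" using partition_onD1[OF P] m by blast
    moreover have "B' = B" if "B' \<in> C" "m \<in> B'" for B'
      using that \<open>B \<in> C\<close> \<open>m \<in> B\<close> partition_onD2[OF P] by (meson disjointD disjoint_iff)
    ultimately show ?thesis by blast
  qed
  have T: "(THE B. B \<in> C \<and> m \<in> B) \<in> C \<and> m \<in> (THE B. B \<in> C \<and> m \<in> B)"
    using theI'[OF ex1] .
  then have "(THE B. B \<in> C \<and> m \<in> B) \<notin> set ?p" using m by blast
  then show ?case using IH T by (simp add: Let_def m_def)
qed simp

lemma block_props: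
  assumes P: "partition_on S C" and fS: "finite S"
  shows "\<And>i. i < card C \<Longrightarrow> block S C i \<in> C"
    and "\<And>i i'. i < card C \<Longrightarrow> i' < card C \<Longrightarrow> i \<noteq> i' \<Longrightarrow> block S C i \<inter> block S C i' = {}"
    and "\<And>s. s \<in> S \<Longrightarrow> block_idx S C s < card C \<and> s \<in> block S C (block_idx S C s)"
proof -
  let ?L = "blocks_upto S C (card C)"
  have D: "distinct ?L" "set ?L \<subseteq> C" using bu_main[OF P fS] by auto
  have fC: "finite C" using part_fin[OF P fS] .
  have setL: "set ?L = C" using D fC by (metis bu_len card_subset_eq distinct_card)
  have bl: "block S C i = ?L ! i" if "i < card C" for i
    unfolding block_def using bu_prefix[OF that] by simp
  show 1: "block S C i \<in> C" if "i < card C" for i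
    using bl[OF that] setL that bu_len by (metis nth_mem)
  show 2: "block S C i \<inter> block S C i' = {}" if "i < card C" "i' < card C" "i \<noteq> i'" for i i'
  proof -
    have "?L ! i \<noteq> ?L ! i'" using D(1) that bu_len by (simp add: nth_eq_iff_index_eq)
    then show ?thesis using bl that 1 partition_onD2[OF P] by (metis disjointD)
  qed
  fix s assume sS: "s \<in> S"
  obtain B where B: "B \<in> C" "s \<in> B" using partition_onD1[OF P] sS by blast
  then obtain i where i: "i < card C" "?L ! i = B" using setL bu_len by (metis in_set_conv_nth)
  have ex: "\<exists>!i. i < card C \<and> s \<in> block S C i"
  proof
    show "i < card C \<and> s \<in> block S C i" using i bl B by simp
  next
    fix i' assume "i' < card C \<and> s \<in> block S C i'"
    then show "i' = i" using 2[of i i'] i bl B by blast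
  qed
  show "block_idx S C s < card C \<and> s \<in> block S C (block_idx S C s)"
    unfolding block_idx_def using theI'[OF ex] .
qed


lemma per_C:
  fixes \<nu> :: "(nat \<Rightarrow> 'a) \<Rightarrow> real"
  assumes fS: "finite S" and X: "X = PiE S Xs" and finX: "finite X" and C: "C \<in> partitions S"
    and y: "y \<in> X" and one: "sum \<nu> X = 1"
  shows "\<rho> C * (recomb X S C \<nu> y - \<nu> y) =
    (\<Sum>xs\<in>{xs. length xs = card C \<and> set xs \<subseteq> X}. rec_rate \<rho> (C,xs) * prod_list (map \<nu> (rec_reactants (C,xs))) *
       ((\<Sum>s\<leftarrow>rec_products S (C,xs). delta s y) - (\<Sum>r\<leftarrow>rec_reactants (C,xs). delta r y)))"
proof -
  have P: "partition_on S C" using C by (simp add: partitions_def)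
  define k where "k = card C"
  define L where "L = {xs. length xs = k \<and> set xs \<subseteq> X}"
  show ?thesis
  proof (cases "k = 0")
    case True
    have fC: "finite C" using part_fin[OF P fS] .
    then have "C = {}" using True k_def by simp
    then have "S = {}" using partition_onD1[OF P] by simp
    then have "X = {\<lambda>_. undefined}" using X by simp
    then have "\<nu> y = 1" using one y by simp
    then show ?thesis using True unfolding k_def rec_rate_def recomb_def by simp
  next
    case False
    then have k: "0 < k" by simp
    have B1: "\<And>i. i < k \<Longrightarrow> block S C i \<subseteq> S"
      using block_props(1)[OF P fS] partition_onD1[OF P] unfolding k_def by blast
    note B2 = block_props(2)[OF P fS, folded k_def]
    note B3 = block_props(3)[OF P fS, folded k_def]
    define PP where "PP xs = (\<Prod>m<k. \<nu> (xs!m))" for xs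
    define G where "G (xs :: (nat \<Rightarrow> 'a) list) j = (\<lambda>s. if s\<in>S then (xs ! ((block_idx S C s + j) mod k)) s else undefined)" for xs j
    have trm: "rec_rate \<rho> (C,xs) * prod_list (map \<nu> (rec_reactants (C,xs))) *
       ((\<Sum>s\<leftarrow>rec_products S (C,xs). delta s y) - (\<Sum>r\<leftarrow>rec_reactants (C,xs). delta r y))
      = \<rho> C / k * ((\<Sum>j<k. PP xs * (if y = G xs j then 1 else 0)) - (\<Sum>j<k. PP xs * (if y = xs!j then 1 else 0)))"
      if "xs \<in> L" for xs
    proof -
      have len: "length xs = k" using that L_def by simp
      have g: "glue S C xs = G xs" unfolding glue_def G_def k_def by simp
      have e1: "prod_list (map \<nu> xs) = PP xs" using prod_list_nth[of \<nu> xs] len PP_def by simp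
      have e2: "(\<Sum>s\<leftarrow>rec_products S (C,xs). delta s y) = (\<Sum>j<k. if y = G xs j then 1 else 0)"
        unfolding rec_products_def using sum_list_nth[of "\<lambda>s. delta s y" "map (G xs) [0..<k]"]
        by (simp add: g k_def[symmetric] delta_def)
      have e3: "(\<Sum>r\<leftarrow>xs. delta r y) = (\<Sum>j<k. if y = xs!j then 1 else 0)"
        using sum_list_nth[of "\<lambda>r. delta r y" xs] len by (simp add: delta_def)
      show ?thesis unfolding rec_rate_def rec_reactants_def using e1 e2 e3
        by (simp add: k_def sum_distrib_left algebra_simps)
    qed
    have R: "(\<Sum>xs\<in>L. PP xs * (if y = G xs j then 1 else 0)) = recomb X S C \<nu> y" if "j < k" for j
      unfolding recomb_def L_def PP_def G_def k_def[symmetric]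
      by (rule core_glue[OF k finX X B1 B2 B3 y that])
    have D: "(\<Sum>xs\<in>L. PP xs * (if y = xs!j then 1 else 0)) = \<nu> y" if "j < k" for j
      unfolding L_def PP_def by (rule core_diag[OF finX y that one])
    have "(\<Sum>xs\<in>L. rec_rate \<rho> (C,xs) * prod_list (map \<nu> (rec_reactants (C,xs))) *
       ((\<Sum>s\<leftarrow>rec_products S (C,xs). delta s y) - (\<Sum>r\<leftarrow>rec_reactants (C,xs). delta r y)))
      = (\<Sum>xs\<in>L. \<rho> C / k * ((\<Sum>j<k. PP xs * (if y = G xs j then 1 else 0)) - (\<Sum>j<k. PP xs * (if y = xs!j then 1 else 0))))"
      using trm by (rule sum.cong[OF refl])
    also have "\<dots> = \<rho> C / k * ((\<Sum>j<k. \<Sum>xs\<in>L. PP xs * (if y = G xs j then 1 else 0)) - (\<Sum>j<k. \<Sum>xs\<in>L. PP xs * (if y = xs!j then 1 else 0)))"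
      by (simp only: sum_distrib_left[symmetric] sum_subtractf sum.swap[of _ L "{..<k}"])
    also have "\<dots> = \<rho> C / k * (k * recomb X S C \<nu> y - k * \<nu> y)"
      using R D by simp
    also have "\<dots> = \<rho> C * (recomb X S C \<nu> y - \<nu> y)" using k by (simp add: field_simps)
    finally show ?thesis unfolding L_def k_def by simp
  qed
qed

theorem theorem3p3:
  fixes n :: nat and Xs :: "nat \<Rightarrow> 'a set" and \<rho> :: "nat set set \<Rightarrow> real"
    and \<omega> :: "real \<Rightarrow> (nat \<Rightarrow> 'a) \<Rightarrow> real"
  defines "S \<equiv> {1..n}"
  defines "X \<equiv> PiE S Xs"
  assumes fin: "\<And>i. i \<in> S \<Longrightarrow> finite (Xs i)"
    and rho_nonneg: "\<And>C. C \<in> partitions S \<Longrightarrow> \<rho> C \<ge> 0"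
    and prob: "\<And>t. t \<ge> 0 \<Longrightarrow> (\<forall>x\<in>X. \<omega> t x \<ge> 0) \<and> (\<Sum>x\<in>X. \<omega> t x) = 1"
    and diff: "\<And>t x. t \<ge> 0 \<Longrightarrow> x \<in> X \<Longrightarrow> (\<lambda>s. \<omega> s x) differentiable (at t within {0..})"
  shows "(\<forall>t\<ge>0. \<forall>x\<in>X.
            ((\<lambda>s. \<omega> s x) has_real_derivative recomb_rhs X S \<rho> (\<omega> t) x) (at t within {0..}))
     \<longleftrightarrow>
         (\<forall>t\<ge>0. \<forall>x\<in>X.
            ((\<lambda>s. \<omega> s x) has_real_derivative
               mass_action (rec_reactions X S) (rec_rate \<rho>) rec_reactants (rec_products S) (\<omega> t) x)
            (at t within {0..}))"
  proof -
  have fS: "finite S" unfolding S_def by simp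
  have finX: "finite X" unfolding X_def using fin fS by (simp add: finite_PiE)
  have fP: "finite (partitions S)"
  proof (rule finite_subset[of _ "Pow (Pow S)"])
    show "partitions S \<subseteq> Pow (Pow S)"
      unfolding partitions_def using partition_onD1 by fastforce
  qed (use fS in simp)
  have eq: "recomb_rhs X S \<rho> (\<omega> t) x =
      mass_action (rec_reactions X S) (rec_rate \<rho>) rec_reactants (rec_products S) (\<omega> t) x"
    if t: "t \<ge> 0" and x: "x \<in> X" for t x
  proof -
    have one: "sum (\<omega> t) X = 1" using prob[OF t] by simp
    have RR: "rec_reactions X S = Sigma (partitions S) (\<lambda>C. {xs. length xs = card C \<and> set xs \<subseteq> X})"
      unfolding rec_reactions_def by auto
    have fL: "finite {xs. length xs = card C \<and> set xs \<subseteq> X}" for C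
      using finite_lists_length_eq[OF finX, of "card C"] by (simp add: conj_commute)
    have "mass_action (rec_reactions X S) (rec_rate \<rho>) rec_reactants (rec_products S) (\<omega> t) x
      = (\<Sum>C\<in>partitions S. \<Sum>xs\<in>{xs. length xs = card C \<and> set xs \<subseteq> X}.
          rec_rate \<rho> (C,xs) * prod_list (map (\<omega> t) (rec_reactants (C,xs))) *
          ((\<Sum>s\<leftarrow>rec_products S (C,xs). delta s x) - (\<Sum>r\<leftarrow>rec_reactants (C,xs). delta r x)))"
      unfolding mass_action_def RR by (subst sum.Sigma[OF fP]) (simp_all add: fL)
    also have "\<dots> = (\<Sum>C\<in>partitions S. \<rho> C * (recomb X S C (\<omega> t) x - \<omega> t x))"
      by (rule sum.cong[OF refl], rule per_C[OF fS X_def[THEN meta_eq_to_obj_eq] finX _ x one, symmetric])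
    finally show ?thesis unfolding recomb_rhs_def by simp
  qed
  show ?thesis using eq by simp
qed

end
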